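(* Let $P\subseteq\mathsf{Pos}(R)$, $\alpha\in\Sigma$, let $T$ be the transition tree of $P$, and let $v\in N^\odot(P,\alpha)$ be a node lying on a segment $s$ of $T$ with $v\neq\mathsf{top}(s)$ and $v\neq\mathsf{bot}(s)$. Then $\mathsf{left}(v)$ lies on $s$. Moreover, $v\in\tilde N^\odot(P,\alpha)$ unless either (a) $v$ is $\odot$-dominated by $\mathsf{top}(s)$, or (b) $\mathsf{first}(\mathsf{right}(v))\subseteq\mathsf{first}(\mathsf{top}(s))$ and $\mathsf{top}(s)$ is weakly $\odot$-dominated by some $\odot$-live node of $T$.
   Context: A regular expression $R$ over $\Sigma$ is identified with its parse tree; $\odot$-nodes $v$ have children $\mathsf{left}(v),\mathsf{right}(v)$. Positions are the character-labeled leaves, $\mathsf{Pos}_\alpha$ those labeled $\alpha$. $\mathsf{first}(v)$, $\mathsf{last}(v)$ are the sets of positions occurring first/last in a sequence of positions generated by the subexpression rooted at $v$; $\mathsf{firstextent}(p)=\{v:p\in\mathsf{first}(v)\}$, $\mathsf{lastextent}(p)=\{v:p\in\mathsf{last}(v)\}$, extended to sets by union. $N^\odot(P,\alpha)$ is the set of $\odot$-nodes $v$ with $\mathsf{left}(v)\in\mathsf{lastextent}(P)$ and $\mathsf{right}(v)\in\mathsf{firstextent}(\mathsf{Pos}_\alpha)$. A node $v$ is $\odot$-dominated by $u$ if $u$ is a proper ancestor of $v$ and $\mathsf{first}(\mathsf{right}(v))\subseteq\mathsf{first}(\mathsf{right}(u))$; $\tilde N^\odot(P,\alpha)$ is the set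 of $v\in N^\odot(P,\alpha)$ not $\odot$-dominated by any node of $N^\odot(P,\alpha)$. The transition tree $T$ of $P$ is the subtree induced by the nodes of $P$ and all their ancestors; a branching node of $T$ has two children in $T$; a segment of $T$ is a path from a leaf or branching node of $T$ up to the nearest branching node above it (or the root if none), with top node $\mathsf{top}(s)$ and bottom node $\mathsf{bot}(s)$. A node $v$ is $\odot$-live if it is a $\odot$-node with $\mathsf{left}(v)\in\mathsf{lastextent}(P)$. A node $v$ of $T$ is weakly $\odot$-dominated by $u$ if $u$ is $\odot$-live, $u$ is a proper ancestor of $v$, and $\mathsf{first}(v)\subseteq\mathsf{first}(\mathsf{right}(u))$. *)

theory Defs
  imports Main "HOL-Library.Sublist"
begin

datatype 'a rexp =
    Zero
  | One
  | Atom 'a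
  | Plus "'a rexp" "'a rexp"
  | Times "'a rexp" "'a rexp"
  | Star "'a rexp"

text \<open>Nodes of the parse tree are addressed by paths (lists of child indices);
  child 0 is the left / only child, child 1 the right child.\<close>

type_synonym node = "nat list"

fun subexp :: "'a rexp \<Rightarrow> node \<Rightarrow> 'a rexp option" where
  "subexp r [] = Some r"
| "subexp (Plus r s) (0 # p) = subexp r p"
| "subexp (Plus r s) (Suc 0 # p) = subexp s p"
| "subexp (Times r s) (0 # p) = subexp r p"
| "subexp (Times r s) (Suc 0 # p) = subexp s p"
| "subexp (Star r) (0 # p) = subexp r p"
| "subexp _ _ = None"

definition nodes :: "'a rexp \<Rightarrow> node set" where
  "nodes R = {p. subexp R p \<noteq> None}"

definition is_times :: "'a rexp \<Rightarrow> node \<Rightarrow> bool" where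
  "is_times R v \<longleftrightarrow> (\<exists>r s. subexp R v = Some (Times r s))"

definition left :: "node \<Rightarrow> node" where "left v = v @ [0]"
definition right :: "node \<Rightarrow> node" where "right v = v @ [1]"

definition Pos :: "'a rexp \<Rightarrow> node set" where
  "Pos R = {p. \<exists>a. subexp R p = Some (Atom a)}"

definition Pos_sym :: "'a rexp \<Rightarrow> 'a \<Rightarrow> node set" where
  "Pos_sym R a = {p. subexp R p = Some (Atom a)}"

definition conc :: "'b list set \<Rightarrow> 'b list set \<Rightarrow> 'b list set" where
  "conc A B = {xs @ ys | xs ys. xs \<in> A \<and> ys \<in> B}"

inductive_set kstar :: "'b list set \<Rightarrow> 'b list set" for A where
  kstar_Nil: "[] \<in> kstar A"
| kstar_app: "xs \<in> A \<Longrightarrow> ys \<in> kstar A \<Longrightarrow> xs @ ys \<in> kstar A"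

text \<open>Language of position sequences (positions relative to the root of the expression).\<close>
fun plang :: "'a rexp \<Rightarrow> node list set" where
  "plang Zero = {}"
| "plang One = {[]}"
| "plang (Atom a) = {[[]]}"
| "plang (Plus r s) = map ((#) 0) ` plang r \<union> map ((#) 1) ` plang s"
| "plang (Times r s) = conc (map ((#) 0) ` plang r) (map ((#) 1) ` plang s)"
| "plang (Star r) = kstar (map ((#) 0) ` plang r)"

definition gen :: "'a rexp \<Rightarrow> node \<Rightarrow> node list set" where
  "gen R v = (case subexp R v of None \<Rightarrow> {} | Some r \<Rightarrow> map (\<lambda>q. v @ q) ` plang r)"

definition first :: "'a rexp \<Rightarrow> node \<Rightarrow> node set" where
  "first R v = {hd w | w. w \<in> gen R v \<and> w \<noteq> []}"

definition last :: "'a rexp \<Rightarrow> node \<Rightarrow> node set" where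
  "last R v = {List.last w | w. w \<in> gen R v \<and> w \<noteq> []}"

definition firstextent :: "'a rexp \<Rightarrow> node set \<Rightarrow> node set" where
  "firstextent R P = {v \<in> nodes R. \<exists>p\<in>P. p \<in> first R v}"

definition lastextent :: "'a rexp \<Rightarrow> node set \<Rightarrow> node set" where
  "lastextent R P = {v \<in> nodes R. \<exists>p\<in>P. p \<in> last R v}"

definition Nodot :: "'a rexp \<Rightarrow> node set \<Rightarrow> 'a \<Rightarrow> node set" where
  "Nodot R P a = {v. is_times R v \<and> left v \<in> lastextent R P
                     \<and> right v \<in> firstextent R (Pos_sym R a)}"

definition proper_anc :: "node \<Rightarrow> node \<Rightarrow> bool" where
  "proper_anc u v \<longleftrightarrow> strict_prefix u v"

definition odot_dominated :: "'a rexp \<Rightarrow> node \<Rightarrow> node \<Rightarrow> bool" where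
  "odot_dominated R u v \<longleftrightarrow> is_times R u \<and> is_times R v \<and> proper_anc u v
      \<and> first R (right v) \<subseteq> first R (right u)"

definition Nodot_tilde :: "'a rexp \<Rightarrow> node set \<Rightarrow> 'a \<Rightarrow> node set" where
  "Nodot_tilde R P a = {v \<in> Nodot R P a. \<not> (\<exists>u \<in> Nodot R P a. odot_dominated R u v)}"

definition ttree :: "node set \<Rightarrow> node set" where
  "ttree P = {u. \<exists>p\<in>P. prefix u p}"

definition branching :: "node set \<Rightarrow> node \<Rightarrow> bool" where
  "branching T u \<longleftrightarrow> u \<in> T \<and> u @ [0] \<in> T \<and> u @ [1] \<in> T"

definition tleaf :: "node set \<Rightarrow> node \<Rightarrow> bool" where
  "tleaf T u \<longleftrightarrow> u \<in> T \<and> (\<forall>i. u @ [i] \<notin> T)"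

text \<open>The segment with bottom node b: b is a leaf or branching node of T, and its
  top node is the nearest proper ancestor of b that is branching in T, or the root
  if there is none.\<close>
definition segment :: "node set \<Rightarrow> node \<Rightarrow> node \<Rightarrow> bool" where
  "segment T t b \<longleftrightarrow> (tleaf T b \<or> branching T b) \<and>
     (if (\<exists>u. strict_prefix u b \<and> branching T u)
      then strict_prefix t b \<and> branching T t
           \<and> (\<forall>u. strict_prefix u b \<and> branching T u \<longrightarrow> prefix u t)
      else t = [])"

definition on_segment :: "node \<Rightarrow> node \<Rightarrow> node \<Rightarrow> bool" where
  "on_segment t b v \<longleftrightarrow> prefix t v \<and> prefix v b"

definition odot_live :: "'a rexp \<Rightarrow> node set \<Rightarrow> node \<Rightarrow> bool" where
  "odot_live R P v \<longleftrightarrow> is_times R v \<and> left v \<in> lastextent R P"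

definition weakly_dominated :: "'a rexp \<Rightarrow> node set \<Rightarrow> node \<Rightarrow> node \<Rightarrow> bool" where
  "weakly_dominated R P u v \<longleftrightarrow> v \<in> ttree P \<and> odot_live R P u \<and> proper_anc u v
      \<and> first R v \<subseteq> first R (right u)"

end

theory Submission
  imports Defs
begin

definition firstr :: "'a rexp \<Rightarrow> node set" where
  "firstr r = {hd w | w. w \<in> plang r \<and> w \<noteq> []}"

lemma first_eq: "first R v = (case subexp R v of None \<Rightarrow> {} | Some r \<Rightarrow> (\<lambda>q. v @ q) ` firstr r)" (is "?L = ?R")
proof (cases "subexp R v")
  case None then show ?thesis by (simp add: first_def gen_def)
next
  case (Some r)
  show ?thesis
  proof
    show "?L \<subseteq> ?R" using Some
      by (auto simp: first_def gen_def firstr_def hd_map)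
    show "?R \<subseteq> ?L" using Some
      apply (clarsimp simp: first_def gen_def firstr_def)
      subgoal for w by (rule exI[of _ "map ((@) v) w"]) (auto simp: hd_map)
      done
  qed
qed

lemma firstr_Plus: "firstr (Plus r s) = (#) 0 ` firstr r \<union> (#) 1 ` firstr s"
  apply (auto simp: firstr_def hd_map)
   apply (metis hd_map image_eqI list.map_disc_iff)
  apply (metis hd_map image_eqI list.map_disc_iff)
  done

lemma firstr_Times: "firstr (Times r s) = {0#p|p. p\<in>firstr r \<and> plang s \<noteq> {}} \<union> {1#p|p. p \<in> firstr s \<and> [] \<in> plang r}" (is "?L = ?R")
proof
  show "?L \<subseteq> ?R"
  proof
    fix q assume "q \<in> firstr (Times r s)"
    then obtain w where w: "w \<in> plang (Times r s)" "w \<noteq> []" "q = hd w" by (auto simp: firstr_def)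
    then obtain x y where xy: "x \<in> plang r" "y \<in> plang s" "w = map ((#) 0) x @ map ((#) 1) y"
      by (auto simp: conc_def)
    show "q \<in> ?R"
    proof (cases "x = []")
      case True
      then have "y \<noteq> []" using xy w by auto
      then show ?thesis using True xy w by (auto simp: firstr_def hd_map)
    next
      case False
      then show ?thesis using xy w by (auto simp: firstr_def hd_map)
    qed
  qed
  show "?R \<subseteq> ?L"
  proof
    fix q assume "q \<in> {0#p|p. p\<in>firstr r \<and> plang s \<noteq> {}} \<union> {1#p|p. p \<in> firstr s \<and> [] \<in> plang r}"
    then show "q \<in> firstr (Times r s)"
    proof
      assume "q \<in> {0#p|p. p\<in>firstr r \<and> plang s \<noteq> {}}"
      then obtain x y where "x \<in> plang r" "x \<noteq> []" "q = 0 # hd x" "y \<in> plang s"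
        by (auto simp: firstr_def)
      then show ?thesis
        unfolding firstr_def
        by (intro CollectI exI[of _ "map ((#) 0) x @ map ((#) 1) y"]) (auto simp: conc_def hd_map)
    next
      assume "q \<in> {1#p|p. p \<in> firstr s \<and> [] \<in> plang r}"
      then obtain y where "[] \<in> plang r" "y \<noteq> []" "q = 1 # hd y" "y \<in> plang s"
        by (auto simp: firstr_def)
      then show ?thesis
        unfolding firstr_def
        by (intro CollectI exI[of _ "map ((#) 1) y"]) (force simp: conc_def hd_map)
    qed
  qed
qed

lemma kstar_hd: "w \<in> kstar A \<Longrightarrow> w \<noteq> [] \<Longrightarrow> \<exists>x\<in>A. x \<noteq> [] \<and> hd x = hd w"
  by (induction rule: kstar.induct) (auto, metis append_Nil hd_append2)

lemma firstr_Star: "firstr (Star r) = (#) 0 ` firstr r" (is "?L = ?R")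
proof
  show "?L \<subseteq> ?R"
  proof
    fix q assume "q \<in> firstr (Star r)"
    then obtain w where "w \<in> kstar (map ((#) 0) ` plang r)" "w \<noteq> []" "q = hd w" by (auto simp: firstr_def)
    from kstar_hd[OF this(1,2)] this(3) obtain x where x: "x \<in> plang r" "x \<noteq> []" "q = 0 # hd x"
      by (auto simp: hd_map)
    then have "hd x \<in> firstr r" by (auto simp: firstr_def)
    then show "q \<in> ?R" using x by auto
  qed
  show "?R \<subseteq> ?L"
  proof
    fix q assume "q \<in> (#) 0 ` firstr r"
    then obtain x where x: "x \<in> plang r" "x \<noteq> []" "q = 0 # hd x" by (auto simp: firstr_def)
    have "map ((#) 0) x @ [] \<in> kstar (map ((#) 0) ` plang r)"
      by (rule kstar_app) (use x in \<open>auto intro: kstar_Nil\<close>)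
    then show "q \<in> firstr (Star r)" unfolding firstr_def using x
      by (intro CollectI exI[of _ "map ((#) 0) x"]) (auto simp: hd_map)
  qed
qed

lemma firstAB_step:
  assumes S1: "{q \<in> firstr r. prefix (i#p) q} \<subseteq> (#) i ` {q \<in> firstr r'. prefix p q}"
    and S2: "(\<exists>q\<in>firstr r. prefix (i#p) q) \<Longrightarrow> (#) i ` firstr r' \<subseteq> firstr r"
    and IH: "({q \<in> firstr r'. prefix p q} \<subseteq> (@) p ` firstr s) \<and>
    ((\<exists>q\<in>firstr r'. prefix p q) \<longrightarrow> (@) p ` firstr s \<subseteq> firstr r')"
  shows "({q \<in> firstr r. prefix (i#p) q} \<subseteq> (@) (i#p) ` firstr s) \<and>
    ((\<exists>q\<in>firstr r. prefix (i#p) q) \<longrightarrow> (@) (i#p) ` firstr s \<subseteq> firstr r)"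
proof (intro conjI impI)
  show "{q \<in> firstr r. prefix (i#p) q} \<subseteq> (@) (i#p) ` firstr s"
  proof
    fix q assume "q \<in> {q \<in> firstr r. prefix (i#p) q}"
    then obtain q' where "q = i # q'" "q' \<in> {q \<in> firstr r'. prefix p q}" using S1 by blast
    then show "q \<in> (@) (i#p) ` firstr s" using IH by auto
  qed
  assume ex: "\<exists>q\<in>firstr r. prefix (i#p) q"
  then obtain q where "q \<in> {q \<in> firstr r. prefix (i#p) q}" by blast
  then obtain q' where "q' \<in> {q \<in> firstr r'. prefix p q}" using S1 by blast
  then have "(@) p ` firstr s \<subseteq> firstr r'" using IH by blast
  then show "(@) (i#p) ` firstr s \<subseteq> firstr r" using S2[OF ex] by auto
qed

lemma firstAB:
  "subexp r c = Some s \<Longrightarrow>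
    ({p \<in> firstr r. prefix c p} \<subseteq> (@) c ` firstr s) \<and>
    ((\<exists>p\<in>firstr r. prefix c p) \<longrightarrow> (@) c ` firstr s \<subseteq> firstr r)"
proof (induction r c arbitrary: s rule: subexp.induct)
  case (1 r)
  then show ?case by auto
next
  case (2 r1 r2 p)
  show ?case by (rule firstAB_step[OF _ _ 2(1)[OF 2(2)[simplified]]]) (auto simp: firstr_Plus)
next
  case (3 r1 r2 p)
  show ?case by (rule firstAB_step[OF _ _ 3(1)[OF 3(2)[simplified]]]) (auto simp: firstr_Plus One_nat_def)
next
  case (4 r1 r2 p)
  show ?case by (rule firstAB_step[OF _ _ 4(1)[OF 4(2)[simplified]]]) (auto simp: firstr_Times)
next
  case (5 r1 r2 p)
  show ?case by (rule firstAB_step[OF _ _ 5(1)[OF 5(2)[simplified]]]) (auto simp: firstr_Times One_nat_def)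
next
  case (6 r1 p)
  show ?case by (rule firstAB_step[OF _ _ 6(1)[OF 6(2)[simplified]]]) (auto simp: firstr_Star)
qed auto

lemma subexp_append: "subexp r (c @ d) = (case subexp r c of None \<Rightarrow> None | Some s \<Rightarrow> subexp s d)"
  by (induction r c rule: subexp.induct) auto

lemma subexp_prefix: "subexp r q \<noteq> None \<Longrightarrow> prefix c q \<Longrightarrow> subexp r c \<noteq> None"
  by (auto simp: prefix_def subexp_append split: option.splits)

lemma first_prefix: "p \<in> first R x \<Longrightarrow> prefix x p"
  by (auto simp: first_eq split: option.splits)

lemma last_prefix: "p \<in> last R x \<Longrightarrow> prefix x p"
  apply (auto simp: last_def gen_def split: option.splits)
  by (metis last_map prefixI)

lemma nodeAB:
  assumes "prefix a c" "subexp R c = Some s"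
  shows "{p\<in>first R a. prefix c p} \<subseteq> first R c"
    and "p \<in> first R a \<Longrightarrow> prefix c p \<Longrightarrow> first R c \<subseteq> first R a"
proof -
  obtain d where c: "c = a @ d" using assms(1) by (auto simp: prefix_def)
  obtain r where r: "subexp R a = Some r" "subexp r d = Some s"
    using assms(2) c by (auto simp: subexp_append split: option.splits)
  note AB = firstAB[OF r(2)]
  show "{p\<in>first R a. prefix c p} \<subseteq> first R c"
  proof
    fix p assume "p \<in> {p\<in>first R a. prefix c p}"
    then obtain p' where p': "p' \<in> firstr r" "p = a @ p'" "prefix (a @ d) (a @ p')"
      using r c by (auto simp: first_eq)
    then have "prefix d p'" by simp
    then have "p' \<in> (@) d ` firstr s" using AB p' by blast
    then show "p \<in> first R c" using p' c assms(2) by (auto simp: first_eq)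
  qed
  assume p: "p \<in> first R a" "prefix c p"
  then obtain p' where p': "p' \<in> firstr r" "p = a @ p'" "prefix (a @ d) (a @ p')"
    using r c by (auto simp: first_eq)
  then have "prefix d p'" by simp
  then have "(@) d ` firstr s \<subseteq> firstr r" using AB p' by blast
  then show "first R c \<subseteq> first R a" using c assms(2) r by (auto simp: first_eq)
qed

lemma ttree_prefix: "u \<in> ttree P \<Longrightarrow> prefix w u \<Longrightarrow> w \<in> ttree P"
  by (auto simp: ttree_def intro: prefix_order.trans)

lemma seg_b: "segment T t b \<Longrightarrow> b \<in> T"
  by (auto simp: segment_def tleaf_def branching_def)

lemma part1:
  assumes P: "P \<subseteq> Pos R"
    and seg: "segment (ttree P) t b"
    and tv: "is_times R v" and lv: "left v \<in> lastextent R P"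
    and on: "on_segment t b v" and "v \<noteq> t" and "v \<noteq> b"
  shows "prefix (left v) b"
proof -
  let ?T = "ttree P"
  have bT: "b \<in> ?T" using seg_b[OF seg] .
  have vb: "strict_prefix v b" using on \<open>v \<noteq> b\<close> by (auto simp: on_segment_def)
  have tv': "prefix t v" using on by (auto simp: on_segment_def)
  have nb: "\<not> branching ?T v"
  proof
    assume br: "branching ?T v"
    show False
    proof (cases "\<exists>u. strict_prefix u b \<and> branching ?T u")
      case True
      then have "prefix v t" using seg vb br by (auto simp: segment_def)
      then show False using tv' \<open>v \<noteq> t\<close> by auto
    next
      case False then show False using vb br by auto
    qed
  qed
  have lT: "left v \<in> ?T"
    using lv P by (auto simp: lastextent_def ttree_def dest: last_prefix)
  have vT: "v \<in> ?T" using ttree_prefix[OF bT] vb by auto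
  have rT: "right v \<notin> ?T" using nb lT vT by (auto simp: branching_def left_def right_def)
  obtain i rest where b: "b = v @ i # rest" using vb
    by (metis append_Nil2 prefix_def strict_prefix_def neq_Nil_conv)
  have iT: "v @ [i] \<in> ?T" using ttree_prefix[OF bT] b by auto
  then obtain p where "p \<in> P" "prefix (v @ [i]) p" by (auto simp: ttree_def)
  then have "subexp R (v @ [i]) \<noteq> None" using P subexp_prefix by (fastforce simp: Pos_def)
  moreover obtain r s where "subexp R v = Some (Times r s)" using tv by (auto simp: is_times_def)
  ultimately have "i = 0 \<or> i = 1"
    by (cases i; cases "i - 1") (auto simp: subexp_append)
  then have "i = 0" using rT iT by (auto simp: right_def)
  then show ?thesis using b by (simp add: left_def)
qed

theorem lemma7:
  fixes R :: "'a rexp" and P :: "node set" and \<alpha> :: 'a and t b v :: node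
  assumes "P \<subseteq> Pos R"
    and "segment (ttree P) t b"
    and "v \<in> Nodot R P \<alpha>"
    and "on_segment t b v" and "v \<noteq> t" and "v \<noteq> b"
  shows "on_segment t b (left v) \<and>
         (v \<in> Nodot_tilde R P \<alpha>
          \<or> odot_dominated R t v
          \<or> (first R (right v) \<subseteq> first R t
             \<and> (\<exists>u \<in> ttree P. odot_live R P u \<and> weakly_dominated R P u t)))"
proof -
  note P = assms(1) and seg = assms(2)
  from assms(3) have tv: "is_times R v" and lv: "left v \<in> lastextent R P"
    and rv: "right v \<in> firstextent R (Pos_sym R \<alpha>)" by (auto simp: Nodot_def)
  have lb: "prefix (left v) b" using part1[OF P seg tv lv assms(4-6)] .
  have tvp: "prefix t v" and vbp: "prefix v b" using assms(4) by (auto simp: on_segment_def)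
  have part1': "on_segment t b (left v)" using lb tvp by (auto simp: on_segment_def left_def)
  have bT: "b \<in> ttree P" using seg_b[OF seg] .
  have vb: "strict_prefix v b" using vbp assms(6) by auto
  show ?thesis
  proof (cases "v \<in> Nodot_tilde R P \<alpha>")
    case True then show ?thesis using part1' by blast
  next
    case False
    then obtain u where u: "u \<in> Nodot R P \<alpha>" "odot_dominated R u v"
      using assms(3) by (auto simp: Nodot_tilde_def)
    then have uv: "strict_prefix u v" and fsub: "first R (right v) \<subseteq> first R (right u)"
      and tu: "is_times R u" and lu: "left u \<in> lastextent R P"
      by (auto simp: odot_dominated_def proper_anc_def Nodot_def)
    obtain p0 where p0: "p0 \<in> first R (right v)" using rv by (auto simp: firstextent_def)
    have vp0: "prefix (v @ [1]) p0" using first_prefix[OF p0] by (simp add: right_def)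
    have up0: "prefix (u @ [1]) p0" using first_prefix fsub p0 by (fastforce simp: right_def)
    have "prefix t u \<or> prefix u t" using prefix_same_cases[OF tvp, of u] uv by auto
    moreover
    { assume "u = t"
      then have ?thesis using u part1' by blast }
    moreover
    { assume tu': "strict_prefix t u"
      have ub: "strict_prefix u b" using uv vb by (rule prefix_order.less_trans)
      have "prefix (left u) b"
        by (rule part1[OF P seg tu lu]) (use tu' ub in \<open>auto simp: on_segment_def strict_prefix_def\<close>)
      then have "prefix (u @ [0]) v \<or> prefix v (u @ [0])"
        using prefix_same_cases[OF _ vbp, of "u @ [0]"] by (auto simp: left_def)
      then have "prefix (u @ [0]) v" using uv
        by (auto simp: prefix_snoc)
      moreover have "prefix v p0" using vp0 by (auto simp: prefix_def)
      ultimately have "prefix (u @ [0]) p0" by (rule prefix_order.trans)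
      then have "prefix (u @ [0]) (u @ [1]) \<or> prefix (u @ [1]) (u @ [0])"
        using prefix_same_cases[OF _ up0] by blast
      then have False by (auto simp: prefix_snoc dest: prefix_length_le)
      then have ?thesis by blast }
    moreover
    { assume ut: "strict_prefix u t"
      have "prefix v p0" using vp0 by (auto simp: prefix_def)
      with tvp have tp0: "prefix t p0" by (rule prefix_order.trans)
      have "prefix (u @ [1]) t \<or> prefix t (u @ [1])" using prefix_same_cases[OF up0 tp0] .
      then have u1t: "prefix (u @ [1]) t" using ut
        by (auto simp: prefix_snoc)
      have tT: "t \<in> ttree P" using ttree_prefix[OF bT] prefix_order.trans[OF tvp vbp] by blast
      obtain q where "q \<in> P" "prefix t q" using tT by (auto simp: ttree_def)
      then have "subexp R t \<noteq> None" using P subexp_prefix by (fastforce simp: Pos_def)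
      then obtain s where st: "subexp R t = Some s" by auto
      have A: "{p\<in>first R (right u). prefix t p} \<subseteq> first R t"
        using nodeAB(1)[OF _ st] u1t by (simp add: right_def)
      have B: "first R t \<subseteq> first R (right u)"
        using nodeAB(2)[OF _ st, of "right u" p0] u1t p0 fsub tp0 by (auto simp: right_def)
      have C: "first R (right v) \<subseteq> first R t"
      proof
        fix p assume p: "p \<in> first R (right v)"
        have "prefix v p" using first_prefix[OF p] by (auto simp: prefix_def right_def)
        with tvp have "prefix t p" by (rule prefix_order.trans)
        then show "p \<in> first R t" using A p fsub by blast
      qed
      have uT: "u \<in> ttree P" using ttree_prefix[OF tT] ut by auto
      have live: "odot_live R P u" using tu lu by (simp add: odot_live_def)
      have "weakly_dominated R P u t" using tT live ut B
        by (simp add: weakly_dominated_def proper_anc_def)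
      then have ?thesis using C uT live part1' by blast }
    ultimately show ?thesis
    proof (elim disjE)
      assume h: "u = t \<Longrightarrow> ?thesis" "strict_prefix t u \<Longrightarrow> ?thesis" "prefix t u"
      show ?thesis
      proof (cases "u = t")
        case True then show ?thesis by (rule h(1))
      next
        case False then show ?thesis using h(3) by (intro h(2)) (simp add: strict_prefix_def)
      qed
    next
      assume h: "u = t \<Longrightarrow> ?thesis" "strict_prefix u t \<Longrightarrow> ?thesis" "prefix u t"
      show ?thesis
      proof (cases "u = t")
        case True then show ?thesis by (rule h(1))
      next
        case False then show ?thesis using h(3) by (intro h(2)) (simp add: strict_prefix_def)
      qed
    qed
  qed
qed

end
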